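(* Let $n$ and $k$ be positive integers, and let $\mathcal{Q}$ be a Boolean lattice of dimension $n+k$ whose elements are colored blue or red. Then $\mathcal{Q}$ contains an all-red copy of $Q_n$ or an all-blue chain of length $k+1$ (i.e. on $k+1$ elements).
   Context: The Boolean lattice of dimension $N$ is the poset of all subsets of an $N$-element set ordered by inclusion; $Q_n$ denotes the Boolean lattice of dimension $n$. A copy of $Q_n$ in $\mathcal{Q}$ is an induced subposet of $\mathcal{Q}$ isomorphic to $Q_n$. *)

theory Defs
  imports Main
begin

text \<open>The Boolean lattice of dimension n is modelled as Pow {..<n} ordered by inclusion.
  A copy of Q_n inside the Boolean lattice Pow X is a family S of subsets of X such that
  (S, subset) is isomorphic as a poset to (Pow {..<n}, subset), i.e. the image of an
  order embedding of Pow {..<n} (order embeddings are automatically injective).\<close>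

definition is_copy_of_Q :: "nat \<Rightarrow> 'a set \<Rightarrow> 'a set set \<Rightarrow> bool" where
  "is_copy_of_Q n X S \<longleftrightarrow> S \<subseteq> Pow X \<and>
     (\<exists>f :: nat set \<Rightarrow> 'a set. f ` Pow {..<n} = S \<and>
        (\<forall>A \<in> Pow {..<n}. \<forall>B \<in> Pow {..<n}. A \<subseteq> B \<longleftrightarrow> f A \<subseteq> f B))"

definition is_chain_in :: "nat \<Rightarrow> 'a set \<Rightarrow> 'a set set \<Rightarrow> bool" where
  "is_chain_in m X S \<longleftrightarrow> S \<subseteq> Pow X \<and> finite S \<and> card S = m \<and>
     (\<forall>A \<in> S. \<forall>B \<in> S. A \<subseteq> B \<or> B \<subseteq> A)"

end

theory Submission
  imports Defs
begin

theorem corollary9: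
  fixes n k :: nat and X :: "'a set" and red :: "'a set \<Rightarrow> bool"
  assumes "n > 0" and "k > 0" and "finite X" and "card X = n + k"
  shows "(\<exists>S. is_copy_of_Q n X S \<and> (\<forall>A \<in> S. red A))
       \<or> (\<exists>C. is_chain_in (k + 1) X C \<and> (\<forall>A \<in> C. \<not> red A))"
proof (rule disjCI)
  assume nochain: "\<not> (\<exists>C. is_chain_in (k + 1) X C \<and> (\<forall>A \<in> C. \<not> red A))"
  define bc where "bc A C \<longleftrightarrow> C \<subseteq> Pow A \<and> (\<forall>P\<in>C. \<forall>Q\<in>C. P \<subseteq> Q \<or> Q \<subseteq> P) \<and> (\<forall>P\<in>C. \<not> red P)"
    for A :: "'a set" and C
  define g where "g A = Max {card C | C. bc A C}" for A
  have finX: "finite X" by fact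
  have K: "card C \<le> k" if "A \<subseteq> X" "bc A C" for A C
  proof (rule ccontr)
    assume "\<not> card C \<le> k"
    then have "k + 1 \<le> card C" by simp
    then obtain T where T: "T \<subseteq> C" "card T = k + 1" "finite T" by (rule obtain_subset_with_card_n)
    have c: "C \<subseteq> Pow A" "\<forall>P\<in>C. \<forall>Q\<in>C. P \<subseteq> Q \<or> Q \<subseteq> P" "\<forall>P\<in>C. \<not> red P"
      using that(2) unfolding bc_def by auto
    have "T \<subseteq> Pow X" using T(1) c(1) that(1) by auto
    then have "is_chain_in (k + 1) X T \<and> (\<forall>A \<in> T. \<not> red A)"
      using T c unfolding is_chain_in_def by (simp add: subset_iff)
    with nochain show False by blast
  qed
  have finC: "finite C" if "A \<subseteq> X" "bc A C" for A C
    using that finX unfolding bc_def by (meson finite_Pow_iff finite_subset)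
  have Gfin: "finite {card C | C. bc A C}" if "A \<subseteq> X" for A
    by (rule finite_subset[of _ "{..k}"]) (use K that in auto)
  have G0: "bc A {}" for A unfolding bc_def by auto
  have g_ge: "card C \<le> g A" if "A \<subseteq> X" "bc A C" for A C
    unfolding g_def using Gfin[OF that(1)] that(2) by (intro Max_ge) auto
  have g_ub: "g A \<le> k" if "A \<subseteq> X" for A
  proof -
    have "g A \<in> {card C | C. bc A C}" unfolding g_def
      using Gfin[OF that] G0 by (intro Max_in) auto
    then show ?thesis using K that by auto
  qed
  have g_ex: "\<exists>C. bc A C \<and> card C = g A" if "A \<subseteq> X" for A
  proof -
    have "g A \<in> {card C | C. bc A C}" unfolding g_def
      using Gfin[OF that] G0 by (intro Max_in) auto
    then show ?thesis by auto
  qed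
  have g_mono: "g A \<le> g B" if "A \<subseteq> B" "B \<subseteq> X" for A B
  proof -
    have AX: "A \<subseteq> X" using that by auto
    obtain C where C: "bc A C" "card C = g A" using g_ex[OF AX] by blast
    have "bc B C" using C(1) Pow_mono[OF that(1)] unfolding bc_def by (meson subset_trans)
    from g_ge[OF that(2) this] C(2) show ?thesis by simp
  qed
  have g_step: "g A + 1 \<le> g B" if "A \<subset> B" "B \<subseteq> X" "\<not> red B" for A B
  proof -
    have AX: "A \<subseteq> X" using that by auto
    obtain C where C: "bc A C" "card C = g A" using g_ex[OF AX] by blast
    have fC: "finite C" using finC[OF AX C(1)] .
    have nB: "B \<notin> C" using C(1) that(1) unfolding bc_def by auto
    have "bc B (insert B C)" using C(1) that unfolding bc_def by auto
    from g_ge[OF that(2) this] have "card (insert B C) \<le> g B" .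
    then show ?thesis using fC nB C(2) by simp
  qed
  have g_base: "1 \<le> g B" if "B \<subseteq> X" "\<not> red B" for B
  proof -
    have "bc B {B}" using that unfolding bc_def by auto
    from g_ge[OF that(1) this] show ?thesis by simp
  qed
  obtain Y where Y: "Y \<subseteq> X" "card Y = n" "finite Y"
    using assms(4) by (metis le_add1 obtain_subset_with_card_n)
  define Z where "Z = X - Y"
  have cZ: "card Z = k" unfolding Z_def using Y assms(3,4) by (simp add: card_Diff_subset)
  have fZ: "finite Z" unfolding Z_def using finX by simp
  obtain e where e: "bij_betw e {0..<n} Y" using ex_bij_betw_nat_finite[OF Y(3)] Y(2) by auto
  obtain z where z: "bij_betw z {0..<k} Z" using ex_bij_betw_nat_finite[OF fZ] cZ by auto
  define Zi where "Zi i = z ` {0..<i}" for i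
  have Zi_sub: "Zi i \<subseteq> Z" if "i \<le> k" for i
    using z that unfolding Zi_def bij_betw_def by auto
  have Zi_mono: "Zi i \<subseteq> Zi j" if "i \<le> j" for i j
    unfolding Zi_def using that by auto
  have YZ: "Y \<inter> Z = {}" "Y \<union> Z = X" unfolding Z_def using Y by auto
  define ix where "ix B = (LEAST i. g (B \<union> Zi i) \<le> i)" for B
  have ix_ex: "g (B \<union> Zi k) \<le> k" if "B \<subseteq> Y" for B
    using g_ub[of "B \<union> Zi k"] Zi_sub[of k] that YZ by auto
  have ix_le: "ix B \<le> k" if "B \<subseteq> Y" for B
    unfolding ix_def using ix_ex[OF that] by (rule Least_le)
  have ix_prop: "g (B \<union> Zi (ix B)) \<le> ix B" if "B \<subseteq> Y" for B
    unfolding ix_def using ix_ex[OF that] by (rule LeastI)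
  have ix_mono: "ix A \<le> ix B" if "A \<subseteq> B" "B \<subseteq> Y" for A B
  proof -
    have "B \<union> Zi (ix B) \<subseteq> X" using Zi_sub[OF ix_le[OF that(2)]] that YZ by auto
    then have "g (A \<union> Zi (ix B)) \<le> g (B \<union> Zi (ix B))" using that by (intro g_mono) auto
    also have "\<dots> \<le> ix B" using ix_prop[OF that(2)] .
    finally show ?thesis unfolding ix_def[of A] by (rule Least_le)
  qed
  have ix_red: "red (B \<union> Zi (ix B))" if "B \<subseteq> Y" for B
  proof (rule ccontr)
    assume nr: "\<not> red (B \<union> Zi (ix B))"
    have sub: "B \<union> Zi (ix B) \<subseteq> X" using Zi_sub[OF ix_le[OF that]] that YZ by auto
    show False
    proof (cases "ix B")
      case 0
      then show ?thesis using g_base[OF sub nr] ix_prop[OF that] by simp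
    next
      case (Suc j)
      have "\<not> g (B \<union> Zi j) \<le> j" unfolding ix_def
        using Suc ix_def by (metis lessI not_less_Least)
      have jk: "j < k" using Suc ix_le[OF that] by simp
      have zj: "z j \<in> Z" "z j \<notin> Zi j"
        using z jk unfolding Zi_def bij_betw_def inj_on_def by (auto, fastforce)
      have "z j \<notin> B" using zj(1) that YZ by auto
      then have "B \<union> Zi j \<subset> B \<union> Zi (ix B)"
        using zj Suc unfolding Zi_def by auto
      from g_step[OF this sub nr] \<open>\<not> g (B \<union> Zi j) \<le> j\<close> ix_prop[OF that] Suc
      show False by simp
    qed
  qed
  define f where "f S = e ` S \<union> Zi (ix (e ` S))" for S
  have eS: "e ` S \<subseteq> Y" if "S \<subseteq> {..<n}" for S
    using e that unfolding bij_betw_def by auto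
  have fY: "f S \<inter> Y = e ` S" if "S \<subseteq> {..<n}" for S
    using eS[OF that] Zi_sub[OF ix_le[OF eS[OF that]]] YZ unfolding f_def by auto
  have inje: "inj_on e {..<n}" using e unfolding bij_betw_def by (simp add: lessThan_atLeast0)
  show "\<exists>S. is_copy_of_Q n X S \<and> (\<forall>A \<in> S. red A)"
  proof (intro exI conjI)
    show "is_copy_of_Q n X (f ` Pow {..<n})"
      unfolding is_copy_of_Q_def
    proof (intro conjI exI ballI)
      show "f ` Pow {..<n} \<subseteq> Pow X"
      proof
        fix T assume "T \<in> f ` Pow {..<n}"
        then obtain S where S: "S \<subseteq> {..<n}" "T = f S" by auto
        have "e ` S \<subseteq> Y" "Zi (ix (e ` S)) \<subseteq> Z" using eS[OF S(1)] Zi_sub[OF ix_le[OF eS[OF S(1)]]] by auto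
        then show "T \<in> Pow X" using S(2) YZ unfolding f_def by auto
      qed
      show "f ` Pow {..<n} = f ` Pow {..<n}" ..
      fix A B assume A: "A \<in> Pow {..<n}" and B: "B \<in> Pow {..<n}"
      show "A \<subseteq> B \<longleftrightarrow> f A \<subseteq> f B"
      proof
        assume "A \<subseteq> B"
        then have "e ` A \<subseteq> e ` B" by auto
        moreover have "ix (e ` A) \<le> ix (e ` B)" using ix_mono[OF \<open>e ` A \<subseteq> e ` B\<close>] eS B by auto
        ultimately show "f A \<subseteq> f B" unfolding f_def using Zi_mono by (meson Un_mono)
      next
        assume "f A \<subseteq> f B"
        then have "f A \<inter> Y \<subseteq> f B \<inter> Y" by auto
        moreover have "f A \<inter> Y = e ` A" "f B \<inter> Y = e ` B" using fY A B by auto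
        ultimately have "e ` A \<subseteq> e ` B" by metis
        then show "A \<subseteq> B" using inj_on_image_mem_iff[OF inje] A B by blast
      qed
    qed
    show "\<forall>A\<in>f ` Pow {..<n}. red A"
      using ix_red eS unfolding f_def by auto
  qed
qed

end
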